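(* Let $\ell=2m\ge2$, $a\in\mathfrak o_\ell^\times$ with image $\bar a\in\mathfrak o_m$, let $x\in\mathfrak g(\mathfrak o_m)$ be an $\bar a$-regular element, and let $\tilde x\in\mathfrak g(\mathfrak o_\ell)$ be any lift of $x$. Then (1) $\mathbf U(\mathfrak o_\ell)\cap C_{\mathbf G(\mathfrak o_\ell)}(\tilde x)K_\ell^m=\mathbf U(\varpi^m\mathfrak o_\ell)$; (2) the character $\varphi_x$ of $K_\ell^m$ agrees with $\theta_a$ on $\mathbf U(\varpi^m\mathfrak o_\ell)$, so that for any character $\widetilde{\varphi_x}$ of $C_{\mathbf G(\mathfrak o_\ell)}(\tilde x)K_\ell^m$ extending $\varphi_x$, $\mathrm{Hom}_{\mathbf U(\varpi^m\mathfrak o_\ell)}(\widetilde{\varphi_x},\theta_a)\ne0$.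
   Context: $\mathfrak o$: ring of integers of a non-archimedean local field, uniformizer $\varpi$, residue field $\mathbb F_q$ of characteristic $p$; $\mathfrak o_r=\mathfrak o/\varpi^r\mathfrak o$. Either $\mathbf G={\rm GL}_n$, $\mathfrak g=M_n$, or $\mathbf G={\rm SL}_n$, $\mathfrak g=\mathfrak{sl}_n$ with $p$ odd, $p\nmid n$. $\mathbf U(\mathfrak o_\ell)$: upper unitriangular matrices; $\mathbf U(\varpi^k\mathfrak o_\ell)$: those whose strictly upper triangular entries lie in $\varpi^k\mathfrak o_\ell$. $K_\ell^m=\ker(\mathbf G(\mathfrak o_\ell)\to\mathbf G(\mathfrak o_m))$. Fix a primitive character $\varphi$ of $(\mathfrak o_\ell,+)$ (nontrivial on $\varpi^{\ell-1}\mathfrak o_\ell$); $\varphi_x(I+\varpi^my)=\varphi(\varpi^m\mathrm{tr}(\hat xy))$ for $I+\varpi^my\in K_\ell^m$, $\hat x$ any lift of $x$; $\theta_a((u_{ij}))=\varphi(au_{12}+u_{23}+\dots+u_{n-1,n})$. For $\alpha\in\mathfrak o_m^\times$ an $\alpha$-regular element of $\mathfrak g(\mathfrak o_m)$ is a matrix with $(2,1)$ entry $\alpha$, $(i+1,i)$ entries $1$ for $2\le i\le n-1$, arbitrary last column, other entries $0$. $C_{\mathbf G(\mathfrak o_\ell)}(\tilde x)$ is the centralizer of $\tilde x$ in $\mathbf G(\mathfrak o_\ell)$. *)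

theory Defs
  imports Complex_Main "HOL-Computational_Algebra.Primes" "Jordan_Normal_Form.Determinant"
begin

text \<open>The ring of integers o of a non-archimedean local field is modelled as an integral
 domain 'a (the whole type) which is a complete discrete valuation ring with uniformizer w
 and finite residue field.  Elements of o_l = o / w^l o are represented by elements of o,
 and n x n matrices over o_l by n x n matrices over o, compared by congruence mod w^l.
 Matrix indices are 0-based.\<close>

definition local_int_ring :: "'a::idom \<Rightarrow> bool" where
  "local_int_ring w \<longleftrightarrow> w \<noteq> 0 \<and> \<not> w dvd 1
     \<and> (\<forall>x. x \<noteq> 0 \<longrightarrow> (\<exists>u k. u dvd 1 \<and> x = u * w ^ k))
     \<and> finite ((\<lambda>x. {y. w dvd x - y}) ` UNIV)
     \<and> (\<forall>s :: nat \<Rightarrow> 'a. (\<forall>k. \<exists>N. \<forall>i\<ge>N. \<forall>j\<ge>N. w ^ k dvd s i - s j)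
          \<longrightarrow> (\<exists>L. \<forall>k. \<exists>N. \<forall>i\<ge>N. w ^ k dvd s i - L))"

definition resid_char :: "'a::idom \<Rightarrow> nat \<Rightarrow> bool" where
  "resid_char w p \<longleftrightarrow> prime p \<and> w dvd of_nat p"

definition mtrace :: "'a::comm_ring_1 mat \<Rightarrow> 'a" where
  "mtrace A = (\<Sum>i<dim_row A. A $$ (i, i))"

definition cong_mat :: "'a::comm_ring_1 \<Rightarrow> nat \<Rightarrow> nat \<Rightarrow> 'a mat \<Rightarrow> 'a mat \<Rightarrow> bool" where
  "cong_mat w k n A B \<longleftrightarrow> (\<forall>i<n. \<forall>j<n. w ^ k dvd A $$ (i, j) - B $$ (i, j))"

text \<open>Representatives of G(o_l): sl = True means SL_n, sl = False means GL_n.\<close>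
definition grp :: "bool \<Rightarrow> 'a::comm_ring_1 \<Rightarrow> nat \<Rightarrow> nat \<Rightarrow> 'a mat set" where
  "grp sl w l n = {g \<in> carrier_mat n n.
      if sl then w ^ l dvd det g - 1 else (\<exists>u. w ^ l dvd det g * u - 1)}"

definition lie_alg :: "bool \<Rightarrow> 'a::comm_ring_1 \<Rightarrow> nat \<Rightarrow> nat \<Rightarrow> 'a mat set" where
  "lie_alg sl w l n = {X \<in> carrier_mat n n. sl \<longrightarrow> w ^ l dvd mtrace X}"

definition U_set :: "'a::comm_ring_1 \<Rightarrow> nat \<Rightarrow> nat \<Rightarrow> 'a mat set" where
  "U_set w l n = {g \<in> carrier_mat n n. \<forall>i<n. \<forall>j<n.
      (j < i \<longrightarrow> w ^ l dvd g $$ (i, j)) \<and> (i = j \<longrightarrow> w ^ l dvd g $$ (i, i) - 1)}"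

definition U_pi :: "'a::comm_ring_1 \<Rightarrow> nat \<Rightarrow> nat \<Rightarrow> nat \<Rightarrow> 'a mat set" where
  "U_pi w k l n = {g \<in> U_set w l n. \<forall>i<n. \<forall>j<n. i < j \<longrightarrow> w ^ k dvd g $$ (i, j)}"

definition centralizer :: "bool \<Rightarrow> 'a::comm_ring_1 \<Rightarrow> nat \<Rightarrow> nat \<Rightarrow> 'a mat \<Rightarrow> 'a mat set" where
  "centralizer sl w l n X = {h \<in> grp sl w l n. cong_mat w l n (h * X) (X * h)}"

definition Kker :: "bool \<Rightarrow> 'a::comm_ring_1 \<Rightarrow> nat \<Rightarrow> nat \<Rightarrow> nat \<Rightarrow> 'a mat set" where
  "Kker sl w l m n = {k \<in> grp sl w l n. cong_mat w m n k (1\<^sub>m n)}"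

definition prod_mod :: "bool \<Rightarrow> 'a::comm_ring_1 \<Rightarrow> nat \<Rightarrow> nat \<Rightarrow> 'a mat set \<Rightarrow> 'a mat set \<Rightarrow> 'a mat set" where
  "prod_mod sl w l n A B = {g \<in> grp sl w l n. \<exists>h\<in>A. \<exists>k\<in>B. cong_mat w l n g (h * k)}"

definition alpha_regular :: "'a::comm_ring_1 \<Rightarrow> nat \<Rightarrow> nat \<Rightarrow> 'a \<Rightarrow> 'a mat \<Rightarrow> bool" where
  "alpha_regular w m n \<alpha> X \<longleftrightarrow> X \<in> carrier_mat n n \<and>
     (\<forall>i<n. \<forall>j<n. j \<noteq> n - 1 \<longrightarrow>
        w ^ m dvd X $$ (i, j) - (if i = 1 \<and> j = 0 then \<alpha>
                                 else if i = j + 1 \<and> 1 \<le> j then 1 else 0))"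

definition add_char :: "'a::comm_ring_1 \<Rightarrow> nat \<Rightarrow> ('a \<Rightarrow> complex) \<Rightarrow> bool" where
  "add_char w l \<phi> \<longleftrightarrow> (\<forall>x y. \<phi> (x + y) = \<phi> x * \<phi> y) \<and> (\<forall>x. \<phi> x \<noteq> 0)
      \<and> (\<forall>x. w ^ l dvd x \<longrightarrow> \<phi> x = 1)"

definition primitive_char :: "'a::comm_ring_1 \<Rightarrow> nat \<Rightarrow> ('a \<Rightarrow> complex) \<Rightarrow> bool" where
  "primitive_char w l \<phi> \<longleftrightarrow> add_char w l \<phi> \<and> (\<exists>y. \<phi> (w ^ (l - 1) * y) \<noteq> 1)"

definition phi_x :: "('a::comm_ring_1 \<Rightarrow> complex) \<Rightarrow> 'a \<Rightarrow> nat \<Rightarrow> 'a mat \<Rightarrow> 'a mat \<Rightarrow> complex" where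
  "phi_x \<phi> w m X k = \<phi> (w ^ m * mtrace (X * (THE y. y \<in> carrier_mat (dim_row k) (dim_row k)
        \<and> k = 1\<^sub>m (dim_row k) + w ^ m \<cdot>\<^sub>m y)))"

definition theta :: "('a::comm_ring_1 \<Rightarrow> complex) \<Rightarrow> 'a \<Rightarrow> 'a mat \<Rightarrow> complex" where
  "theta \<phi> a u = \<phi> (a * u $$ (0, 1) + (\<Sum>i\<in>{1..<dim_row u - 1}. u $$ (i, i + 1)))"

definition is_char_on :: "'a::comm_ring_1 \<Rightarrow> nat \<Rightarrow> nat \<Rightarrow> 'a mat set \<Rightarrow> ('a mat \<Rightarrow> complex) \<Rightarrow> bool" where
  "is_char_on w l n S \<chi> \<longleftrightarrow> (\<forall>g\<in>S. \<chi> g \<noteq> 0) \<and> (\<forall>g\<in>S. \<forall>h\<in>S. \<chi> (g * h) = \<chi> g * \<chi> h)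
      \<and> (\<forall>g\<in>S. \<forall>g'\<in>S. cong_mat w l n g g' \<longrightarrow> \<chi> g = \<chi> g')"

text \<open>Hom_S(chi, psi) for one-dimensional representations: linear maps C -> C, i.e. scalars,
 intertwining chi and psi on S.\<close>
definition hom_chars :: "'b set \<Rightarrow> ('b \<Rightarrow> complex) \<Rightarrow> ('b \<Rightarrow> complex) \<Rightarrow> complex set" where
  "hom_chars S \<chi> \<psi> = {c. \<forall>u\<in>S. c * \<chi> u = \<psi> u * c}"

end

theory Submission
  imports Defs
begin


lemma dvd_diff_mult:
  fixes d :: "'a::comm_ring_1"
  assumes "d dvd a - b" "d dvd c - e" shows "d dvd a*c - b*e"
proof -
  have "a*c - b*e = a*(c-e) + (a-b)*e" by (simp add: algebra_simps)
  thus ?thesis using assms by (simp add: dvd_add dvd_mult dvd_mult2)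
qed

lemma dvd_sum_cong:
  fixes d :: "'a::comm_ring_1"
  assumes "\<And>i. i\<in>S \<Longrightarrow> d dvd f i - g i" shows "d dvd sum f S - sum g S"
  by (simp add: sum_subtractf[symmetric] dvd_sum assms)

lemma dvd_prod_cong:
  fixes d :: "'a::comm_ring_1"
  assumes "finite S" "\<And>i. i\<in>S \<Longrightarrow> d dvd f i - g i" shows "d dvd prod f S - prod g S"
  using assms by (induction S rule: finite_induct) (auto intro: dvd_diff_mult)

lemma det_cong:
  fixes d :: "'a::comm_ring_1"
  assumes A: "A \<in> carrier_mat n n" and B: "B \<in> carrier_mat n n"
    and c: "\<And>i j. i<n \<Longrightarrow> j<n \<Longrightarrow> d dvd A$$(i,j) - B$$(i,j)"
  shows "d dvd det A - det B"
proof -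
  have "d dvd (\<Sum>p\<in>{p. p permutes {0..<n}}. signof p * (\<Prod>i=0..<n. A$$(i,p i)))
     - (\<Sum>p\<in>{p. p permutes {0..<n}}. signof p * (\<Prod>i=0..<n. B$$(i,p i)))"
  proof (rule dvd_sum_cong)
    fix p assume "p \<in> {p. p permutes {0..<n}}"
    hence pi: "\<And>i. i<n \<Longrightarrow> p i < n" using permutes_in_image by fastforce
    have "d dvd (\<Prod>i=0..<n. A$$(i,p i)) - (\<Prod>i=0..<n. B$$(i,p i))"
      by (rule dvd_prod_cong) (auto intro: c pi)
    thus "d dvd signof p * (\<Prod>i=0..<n. A$$(i,p i)) - signof p * (\<Prod>i=0..<n. B$$(i,p i))"
      by (simp add: right_diff_distrib[symmetric])
  qed
  thus ?thesis using det_def'[OF A] det_def'[OF B] by simp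
qed

lemma det_U:
  fixes w :: "'a::comm_ring_1"
  assumes "g \<in> U_set w l n" shows "w^l dvd det g - 1"
proof -
  have g: "g \<in> carrier_mat n n" using assms by (simp add: U_set_def)
  define B where "B = mat n n (\<lambda>(i,j). if i < j then g$$(i,j) else if i = j then 1 else (0::'a))"
  have B: "B \<in> carrier_mat n n" by (simp add: B_def)
  have ut: "upper_triangular B" unfolding upper_triangular_def B_def by auto
  have "det B = prod_list (diag_mat B)" by (rule det_upper_triangular[OF ut B])
  also have "diag_mat B = replicate n 1"
    by (rule nth_equalityI) (auto simp: diag_mat_def B_def)
  finally have dB: "det B = 1" by simp
  have "w^l dvd det g - det B"
  proof (rule det_cong[OF g B])
    fix i j assume "i<n" "j<n"
    thus "w ^ l dvd g $$ (i, j) - B $$ (i, j)" using assms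
      by (cases "i < j"; cases "i = j") (auto simp: B_def U_set_def)
  qed
  thus ?thesis using dB by simp
qed

lemma cong_mat_mult:
  fixes d :: "'a::comm_ring_1"
  assumes "A \<in> carrier_mat n n" "A' \<in> carrier_mat n n" "B \<in> carrier_mat n n" "B' \<in> carrier_mat n n"
    "cong_mat d k n A A'" "cong_mat d k n B B'"
  shows "cong_mat d k n (A*B) (A'*B')"
  unfolding cong_mat_def
proof (intro allI impI)
  fix i j assume ij: "i<n" "j<n"
  have "d^k dvd (\<Sum>t=0..<n. A$$(i,t) * B$$(t,j)) - (\<Sum>t=0..<n. A'$$(i,t) * B'$$(t,j))"
    by (rule dvd_sum_cong) (use assms ij in \<open>auto intro!: dvd_diff_mult simp: cong_mat_def\<close>)
  thus "d ^ k dvd (A * B) $$ (i, j) - (A' * B') $$ (i, j)"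
    using assms ij by (simp add: scalar_prod_def)
qed

lemma cong_mat_trans: "cong_mat d k n A B \<Longrightarrow> cong_mat d k n B C \<Longrightarrow> cong_mat d k n A C"
  unfolding cong_mat_def
  by (metis (no_types, lifting) diff_add_cancel add_diff_eq dvd_add)

lemma cong_mat_sym: "cong_mat d k n A B \<Longrightarrow> cong_mat (d::'a::comm_ring_1) k n B A"
  unfolding cong_mat_def by (metis dvd_minus_iff minus_diff_eq)

lemma cong_mat_weaken: "cong_mat d k n A B \<Longrightarrow> m \<le> k \<Longrightarrow> cong_mat (d::'a::comm_ring_1) m n A B"
  unfolding cong_mat_def using le_imp_power_dvd dvd_trans by blast

lemma unit_cancel:
  fixes e :: "'a::comm_ring_1"
  assumes "e dvd s*z" "e dvd s*v - 1" shows "e dvd z"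
proof -
  have "z = v*(s*z) - z*(s*v - 1)" by (simp add: algebra_simps)
  thus ?thesis using assms by (metis dvd_diff dvd_mult dvd_mult2)
qed



lemma comm_U:
  fixes w :: "'a::idom"
  assumes gC: "g \<in> carrier_mat n n" and xC: "x \<in> carrier_mat n n"
    and low: "\<And>i j. i<n \<Longrightarrow> j<n \<Longrightarrow> j<i \<Longrightarrow> w^m dvd g$$(i,j)"
    and gx: "cong_mat w m n (g*x) (x*g)"
    and xc: "\<forall>i<n. \<forall>j<n. j \<noteq> n - 1 \<longrightarrow> w^m dvd x$$(i,j) - (if i = j+1 then (if j = 0 then a else 1) else 0)"
    and un: "w^m dvd a*v - 1"
  shows "\<And>i j. i<n \<Longrightarrow> j<n \<Longrightarrow> i<j \<Longrightarrow> w^m dvd g$$(i,j)"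
proof -
  define s where "s = (\<lambda>k::nat. if k = 0 then a else 1)"
  have sun: "\<And>k. w^m dvd s k * (if k = 0 then v else 1) - 1" using un by (simp add: s_def)
  have xc': "\<And>i j. i<n \<Longrightarrow> j<n \<Longrightarrow> j \<noteq> n - 1 \<Longrightarrow> w^m dvd x$$(i,j) - (if i = j+1 then s j else 0)"
    using xc unfolding s_def by auto
  have key: "\<And>i j. i<n \<Longrightarrow> j+1<n \<Longrightarrow> w^m dvd s j * g$$(i,j+1) - (if 0<i then s(i-1)*g$$(i-1,j) else 0)"
  proof -
    fix i j assume i: "i<n" and j: "j+1<n"
    have e1: "(g*x)$$(i,j) = (\<Sum>t=0..<n. g$$(i,t) * x$$(t,j))" using gC xC i j by (simp add: scalar_prod_def)
    have e2: "(x*g)$$(i,j) = (\<Sum>t=0..<n. x$$(i,t) * g$$(t,j))" using gC xC i j by (simp add: scalar_prod_def)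
    have c1: "w^m dvd (\<Sum>t=0..<n. g$$(i,t) * x$$(t,j)) - (\<Sum>t=0..<n. g$$(i,t) * (if t = j+1 then s j else 0))"
      by (rule dvd_sum_cong, rule dvd_diff_mult) (use xc' j in auto)
    have s1: "(\<Sum>t=0..<n. g$$(i,t) * (if t = j+1 then s j else 0)) = s j * g$$(i,j+1)"
    proof -
      have "(\<Sum>t=0..<n. g$$(i,t) * (if t = j+1 then s j else 0)) = (\<Sum>t=0..<n. if t = j+1 then g$$(i,t) * s j else 0)"
        by (intro sum.cong) auto
      also have "\<dots> = g$$(i,j+1) * s j" using j by (simp add: sum.delta')
      finally show ?thesis by simp
    qed
    have c2: "w^m dvd (\<Sum>t=0..<n. x$$(i,t) * g$$(t,j)) - (\<Sum>t=0..<n. (if i = t+1 \<and> t \<noteq> n - 1 then s t else 0) * g$$(t,j))"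
    proof (rule dvd_sum_cong)
      fix t assume t: "t \<in> {0..<n}"
      show "w^m dvd x$$(i,t) * g$$(t,j) - (if i = t+1 \<and> t \<noteq> n - 1 then s t else 0) * g$$(t,j)"
      proof (cases "t = n - 1")
        case True
        hence "w^m dvd g$$(t,j)" using low[of t j] t j by simp
        thus ?thesis using True by simp
      next
        case False
        thus ?thesis using xc'[of i t] i t by (auto intro!: dvd_diff_mult)
      qed
    qed
    have s2: "(\<Sum>t=0..<n. (if i = t+1 \<and> t \<noteq> n - 1 then s t else 0) * g$$(t,j))
       = (if 0<i then s(i-1)*g$$(i-1,j) else 0)"
    proof (cases "i = 0")
      case True thus ?thesis by simp
    next
      case False
      have "(\<Sum>t=0..<n. (if i = t+1 \<and> t \<noteq> n - 1 then s t else 0) * g$$(t,j))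
          = (\<Sum>t=0..<n. if t = i - 1 then s t * g$$(t,j) else 0)"
        using False i by (intro sum.cong) auto
      also have "\<dots> = s(i-1)*g$$(i-1,j)" using i by (simp add: sum.delta')
      finally show ?thesis using False by simp
    qed
    have c0: "w^m dvd (g*x)$$(i,j) - (x*g)$$(i,j)" using gx i j unfolding cong_mat_def by simp
    have "s j * g$$(i,j+1) - (if 0<i then s(i-1)*g$$(i-1,j) else 0)
      = ((g*x)$$(i,j) - (x*g)$$(i,j))
        - ((\<Sum>t=0..<n. g$$(i,t) * x$$(t,j)) - (\<Sum>t=0..<n. g$$(i,t) * (if t = j+1 then s j else 0)))
        + ((\<Sum>t=0..<n. x$$(i,t) * g$$(t,j)) - (\<Sum>t=0..<n. (if i = t+1 \<and> t \<noteq> n - 1 then s t else 0) * g$$(t,j)))"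
      unfolding e1 e2 s1 s2 by (simp add: algebra_simps)
    thus "w^m dvd s j * g$$(i,j+1) - (if 0<i then s(i-1)*g$$(i-1,j) else 0)"
      using c0 c1 c2 by (simp add: dvd_add dvd_diff)
  qed
  have main: "\<And>j. i<j \<Longrightarrow> j<n \<Longrightarrow> w^m dvd g$$(i,j)" for i
  proof (induction i)
    case 0
    then obtain j' where j': "j = Suc j'" by (cases j) auto
    have "w^m dvd s j' * g$$(0,j)" using key[of 0 j'] 0 j' by simp
    thus ?case using unit_cancel sun by blast
  next
    case (Suc i)
    then obtain j' where j': "j = Suc j'" by (cases j) auto
    have "w^m dvd g$$(i,j')" using Suc j' by simp
    hence "w^m dvd s i * g$$(i,j')" by simp
    moreover have "w^m dvd s j' * g$$(Suc i,j) - s i * g$$(i,j')" using key[of "Suc i" j'] Suc j' by simp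
    ultimately have "w^m dvd s j' * g$$(Suc i,j)" by (metis diff_add_cancel dvd_add)
    thus ?case using unit_cancel sun by blast
  qed
  fix i j assume "i<n" "j<n" "i<j"
  thus "w^m dvd g$$(i,j)" using main by blast
qed



lemma char_cong:
  assumes "add_char w l \<phi>" "w^l dvd A - B" shows "\<phi> A = \<phi> B"
proof -
  have "\<phi> A = \<phi> (B + (A - B))" by simp
  also have "\<dots> = \<phi> B * \<phi> (A - B)" using assms(1) unfolding add_char_def by blast
  also have "\<phi> (A - B) = 1" using assms by (simp add: add_char_def)
  finally show ?thesis by simp
qed

lemma part2:
  fixes w :: "'a::idom"
  assumes w0: "w \<noteq> 0" and ch: "add_char w l \<phi>" and lm: "l = 2*m" and n2: "n \<ge> 2"
    and xC: "x \<in> carrier_mat n n"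
    and xc: "\<forall>i<n. \<forall>j<n. j \<noteq> n - 1 \<longrightarrow> w^m dvd x$$(i,j) - (if i = j+1 then (if j = 0 then a else 1) else 0)"
    and u: "u \<in> U_pi w m l n"
  shows "phi_x \<phi> w m x u = theta \<phi> a u"
proof -
  define s where "s = (\<lambda>k::nat. if k = 0 then a else 1)"
  have uC: "u \<in> carrier_mat n n" using u by (simp add: U_pi_def U_set_def)
  have mdl: "w^m dvd w^l" using lm by (simp add: le_imp_power_dvd)
  have ul: "\<And>i j. i<n \<Longrightarrow> j<n \<Longrightarrow> j < i \<Longrightarrow> w^l dvd u$$(i,j)"
   and ud: "\<And>i. i<n \<Longrightarrow> w^l dvd u$$(i,i) - 1"
   and uu: "\<And>i j. i<n \<Longrightarrow> j<n \<Longrightarrow> i < j \<Longrightarrow> w^m dvd u$$(i,j)"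
    using u by (auto simp: U_pi_def U_set_def)
  have dv: "\<And>i j. i<n \<Longrightarrow> j<n \<Longrightarrow> w^m dvd u$$(i,j) - (if i=j then 1 else 0)"
  proof -
    fix i j assume ij: "i<n" "j<n"
    show "w^m dvd u$$(i,j) - (if i=j then 1 else 0)"
      using ul[OF ij] ud[OF ij(1)] uu[OF ij] mdl
      by (cases "i<j"; cases "i=j") (auto intro: dvd_trans)
  qed
  define y where "y = mat n n (\<lambda>(i,j). SOME c. u$$(i,j) - (if i=j then 1 else 0) = w^m * c)"
  have yC: "y \<in> carrier_mat n n" by (simp add: y_def)
  have dy: "dim_row y = n" "dim_col y = n" by (simp_all add: y_def)
  have yp: "\<And>i j. i<n \<Longrightarrow> j<n \<Longrightarrow> u$$(i,j) - (if i=j then 1 else 0) = w^m * y$$(i,j)"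
  proof -
    fix i j assume ij: "i<n" "j<n"
    from dv[OF ij] obtain c where "u$$(i,j) - (if i=j then 1 else 0) = w^m * c" by (auto simp: dvd_def)
    hence "u$$(i,j) - (if i=j then 1 else 0) = w^m * (SOME c. u$$(i,j) - (if i=j then 1 else 0) = w^m * c)"
      by (rule someI)
    thus "u$$(i,j) - (if i=j then 1 else 0) = w^m * y$$(i,j)" using ij by (simp add: y_def)
  qed
  have ueq: "u = 1\<^sub>m n + w^m \<cdot>\<^sub>m y"
  proof (rule eq_matI)
    fix i j assume ij: "i < dim_row (1\<^sub>m n + w^m \<cdot>\<^sub>m y)" "j < dim_col (1\<^sub>m n + w^m \<cdot>\<^sub>m y)"
    hence ij': "i<n" "j<n" using dy by auto
    show "u $$ (i, j) = (1\<^sub>m n + w ^ m \<cdot>\<^sub>m y) $$ (i, j)"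
      using yp[OF ij'] ij' yC by (auto simp: algebra_simps)
  qed (use uC yC in auto)
  have wm0: "w^m \<noteq> 0" using w0 by simp
  have the: "(THE y'. y' \<in> carrier_mat (dim_row u) (dim_row u) \<and> u = 1\<^sub>m (dim_row u) + w^m \<cdot>\<^sub>m y') = y"
  proof (rule the_equality)
    show "y \<in> carrier_mat (dim_row u) (dim_row u) \<and> u = 1\<^sub>m (dim_row u) + w ^ m \<cdot>\<^sub>m y"
      using yC uC ueq by simp
  next
    fix y' assume h: "y' \<in> carrier_mat (dim_row u) (dim_row u) \<and> u = 1\<^sub>m (dim_row u) + w ^ m \<cdot>\<^sub>m y'"
    hence y'C: "y' \<in> carrier_mat n n" and e: "1\<^sub>m n + w ^ m \<cdot>\<^sub>m y' = 1\<^sub>m n + w ^ m \<cdot>\<^sub>m y"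
      using uC ueq by auto
    show "y' = y"
    proof (rule eq_matI)
      fix i j assume "i < dim_row y" "j < dim_col y"
      hence ij: "i<n" "j<n" using dy by simp_all
      have "(1\<^sub>m n + w ^ m \<cdot>\<^sub>m y') $$ (i,j) = (1\<^sub>m n + w ^ m \<cdot>\<^sub>m y) $$ (i,j)" using e by simp
      hence "w^m * y'$$(i,j) = w^m * y$$(i,j)" using ij y'C yC by simp
      thus "y' $$ (i, j) = y $$ (i, j)" using w0 by simp
    qed (use y'C yC in auto)
  qed
  have tr: "w^m * mtrace (x * y) = (\<Sum>i<n. \<Sum>k<n. x$$(i,k) * (u$$(k,i) - (if k=i then 1 else 0)))"
  proof -
    have "mtrace (x*y) = (\<Sum>i<n. \<Sum>k<n. x$$(i,k) * y$$(k,i))"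
      unfolding mtrace_def using xC yC by (simp add: scalar_prod_def lessThan_atLeast0)
    hence "w^m * mtrace (x*y) = (\<Sum>i<n. \<Sum>k<n. x$$(i,k) * (w^m * y$$(k,i)))"
      by (simp add: sum_distrib_left algebra_simps)
    also have "\<dots> = (\<Sum>i<n. \<Sum>k<n. x$$(i,k) * (u$$(k,i) - (if k=i then 1 else 0)))"
      by (intro sum.cong refl) (simp add: yp)
    finally show ?thesis .
  qed
  define T' where "T' = (\<Sum>i<n. \<Sum>k<n. if i = k+1 then s k * u$$(k,i) else 0)"
  have c1: "w^l dvd w^m * mtrace (x * y) - T'"
    unfolding tr T'_def
  proof (intro dvd_sum_cong)
    fix i k assume i: "i \<in> {..<n}" and k: "k \<in> {..<n}"
    show "w^l dvd x$$(i,k) * (u$$(k,i) - (if k=i then 1 else 0)) - (if i = k+1 then s k * u$$(k,i) else 0)"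
    proof (cases "k < i")
      case False
      hence "w^l dvd u$$(k,i) - (if k=i then 1 else 0)"
        using ul[of k i] ud[of i] i k by (cases "k=i") auto
      thus ?thesis using False by simp
    next
      case True
      have "k \<noteq> n - 1" using True i by auto
      hence a1: "w^m dvd x$$(i,k) - (if i = k+1 then s k else 0)" using xc[rule_format, of i k] i k by (auto simp: s_def split: if_split_asm)
      have a2: "w^m dvd u$$(k,i)" using uu[of k i] True i k by simp
      have "w^m * w^m dvd (x$$(i,k) - (if i = k+1 then s k else 0)) * u$$(k,i)"
        using a1 a2 by (rule mult_dvd_mono)
      moreover have "w^m * w^m = w^l" using lm by (simp add: power_add[symmetric] mult_2)
      ultimately show ?thesis using True by (cases "i = k+1") (auto simp: algebra_simps)
    qed
  qed
  have inner: "\<And>i. i<n \<Longrightarrow> (\<Sum>k<n. if i = k+1 then s k * u$$(k,i) else 0)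
      = (if 0 < i then s (i-1) * u$$(i-1,i) else 0)"
  proof -
    fix i assume i: "i<n"
    show "(\<Sum>k<n. if i = k+1 then s k * u$$(k,i) else 0) = (if 0 < i then s (i-1) * u$$(i-1,i) else 0)"
    proof (cases "i = 0")
      case True thus ?thesis by simp
    next
      case False
      have "(\<Sum>k<n. if i = k+1 then s k * u$$(k,i) else 0) = (\<Sum>k<n. if k = i - 1 then s k * u$$(k,i) else 0)"
        using False by (intro sum.cong) auto
      also have "\<dots> = s (i-1) * u$$(i-1,i)" using i by (simp add: sum.delta)
      finally show ?thesis using False by simp
    qed
  qed
  obtain n' where n': "n = Suc (Suc n')" using n2 by (metis add_2_eq_Suc le_Suc_ex)
  have "T' = (\<Sum>i<n. if 0 < i then s (i-1) * u$$(i-1,i) else 0)"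
    unfolding T'_def by (rule sum.cong[OF refl], rule inner, simp)
  also have "\<dots> = (\<Sum>k<Suc n'. s k * u$$(k,Suc k))"
    unfolding n' by (subst sum.lessThan_Suc_shift) simp
  also have "\<dots> = a * u$$(0,1) + (\<Sum>k<n'. u$$(Suc k, Suc (Suc k)))"
    by (subst sum.lessThan_Suc_shift) (simp add: s_def)
  also have "(\<Sum>k<n'. u$$(Suc k, Suc (Suc k))) = (\<Sum>i\<in>{1..<dim_row u - 1}. u $$ (i, i + 1))"
  proof -
    have d: "dim_row u - 1 = Suc n'" using uC n' by simp
    have "(\<Sum>i\<in>{Suc 0..<Suc n'}. u$$(i,i+1)) = (\<Sum>k\<in>{0..<n'}. u$$(Suc k, Suc k + 1))"
      by (rule sum.shift_bounds_Suc_ivl)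
    thus ?thesis unfolding d by (simp add: lessThan_atLeast0)
  qed
  finally have T'eq: "T' = a * u $$ (0, 1) + (\<Sum>i\<in>{1..<dim_row u - 1}. u $$ (i, i + 1))" .
  show ?thesis
    unfolding phi_x_def theta_def the T'eq[symmetric]
    using char_cong[OF ch c1] .
qed



theorem lemma4p3:
  fixes w :: "'a::idom" and \<phi> :: "'a \<Rightarrow> complex" and sl :: bool
    and n m l :: nat and a :: 'a and x xt :: "'a mat"
  assumes "local_int_ring w"
    and "sl \<longrightarrow> (\<forall>p. resid_char w p \<longrightarrow> odd p \<and> \<not> p dvd n)"
    and "n \<ge> 2"
    and "l = 2 * m" and "m \<ge> 1"
    and "primitive_char w l \<phi>"
    and "\<exists>u. w ^ l dvd a * u - 1"
    and "x \<in> lie_alg sl w m n" and "alpha_regular w m n a x"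
    and "xt \<in> lie_alg sl w l n" and "cong_mat w m n xt x"
  shows "U_set w l n \<inter> prod_mod sl w l n (centralizer sl w l n xt) (Kker sl w l m n) = U_pi w m l n
    \<and> (\<forall>u\<in>U_pi w m l n. phi_x \<phi> w m x u = theta \<phi> a u)
    \<and> (\<forall>\<chi>. is_char_on w l n (prod_mod sl w l n (centralizer sl w l n xt) (Kker sl w l m n)) \<chi>
           \<and> (\<forall>k\<in>Kker sl w l m n. \<chi> k = phi_x \<phi> w m x k)
           \<longrightarrow> hom_chars (U_pi w m l n) \<chi> (theta \<phi> a) \<noteq> {0})"
proof -
  have w0: "w \<noteq> 0" using assms(1) by (simp add: local_int_ring_def)
  have ch: "add_char w l \<phi>" using assms(6) by (simp add: primitive_char_def)
  obtain v where v: "w^l dvd a*v - 1" using assms(7) by blast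
  have ml: "m \<le> l" using assms(4) by simp
  have mdl: "w^m dvd w^l" using ml by (simp add: le_imp_power_dvd)
  have vm: "w^m dvd a*v - 1" using v mdl dvd_trans by blast
  have xC: "x \<in> carrier_mat n n" using assms(8) by (simp add: lie_alg_def)
  have xtC: "xt \<in> carrier_mat n n" using assms(10) by (simp add: lie_alg_def)
  have ifeq: "(if i = 1 \<and> j = 0 then a else if i = j + 1 \<and> 1 \<le> j then 1 else 0)
      = (if i = j+1 then (if j=0 then a else 1) else 0)" for i j :: nat by auto
  have xc: "\<forall>i<n. \<forall>j<n. j \<noteq> n - 1 \<longrightarrow> w^m dvd x$$(i,j) - (if i = j+1 then (if j = 0 then a else 1) else 0)"
    using assms(9) unfolding alpha_regular_def ifeq by blast
  have P2: "\<forall>u\<in>U_pi w m l n. phi_x \<phi> w m x u = theta \<phi> a u"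
    using part2[OF w0 ch assms(4) assms(3) xC xc] by blast
  have UK: "U_pi w m l n \<subseteq> Kker sl w l m n"
  proof
    fix g assume g: "g \<in> U_pi w m l n"
    hence gU: "g \<in> U_set w l n" by (simp add: U_pi_def)
    hence gC: "g \<in> carrier_mat n n" by (simp add: U_set_def)
    have "w^l dvd det g - 1" by (rule det_U[OF gU])
    hence gG: "g \<in> grp sl w l n" using gC unfolding grp_def by (cases sl) (auto intro: exI[of _ 1])
    have "cong_mat w m n g (1\<^sub>m n)"
      unfolding cong_mat_def
    proof (intro allI impI)
      fix i j assume ij: "i<n" "j<n"
      show "w ^ m dvd g $$ (i, j) - 1\<^sub>m n $$ (i, j)"
        using g ij mdl by (cases "i<j"; cases "i=j") (auto simp: U_pi_def U_set_def intro: dvd_trans)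
    qed
    thus "g \<in> Kker sl w l m n" using gG by (simp add: Kker_def)
  qed
  have P1: "U_set w l n \<inter> prod_mod sl w l n (centralizer sl w l n xt) (Kker sl w l m n) = U_pi w m l n"
  proof
    show "U_pi w m l n \<subseteq> U_set w l n \<inter> prod_mod sl w l n (centralizer sl w l n xt) (Kker sl w l m n)"
    proof
      fix g assume g: "g \<in> U_pi w m l n"
      hence gK: "g \<in> Kker sl w l m n" using UK by blast
      hence gG: "g \<in> grp sl w l n" and gC: "g \<in> carrier_mat n n" by (auto simp: Kker_def grp_def)
      have oG: "1\<^sub>m n \<in> grp sl w l n" unfolding grp_def by (auto intro: exI[of _ 1])
      have "cong_mat w l n (1\<^sub>m n * xt) (xt * 1\<^sub>m n)" using xtC by (simp add: cong_mat_def)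
      hence oC: "1\<^sub>m n \<in> centralizer sl w l n xt" using oG by (simp add: centralizer_def)
      have "cong_mat w l n g (1\<^sub>m n * g)" using gC by (simp add: cong_mat_def)
      hence "g \<in> prod_mod sl w l n (centralizer sl w l n xt) (Kker sl w l m n)"
        using gG oC gK unfolding prod_mod_def by blast
      thus "g \<in> U_set w l n \<inter> prod_mod sl w l n (centralizer sl w l n xt) (Kker sl w l m n)"
        using g by (simp add: U_pi_def)
    qed
  next
    show "U_set w l n \<inter> prod_mod sl w l n (centralizer sl w l n xt) (Kker sl w l m n) \<subseteq> U_pi w m l n"
    proof
      fix g assume g: "g \<in> U_set w l n \<inter> prod_mod sl w l n (centralizer sl w l n xt) (Kker sl w l m n)"
      hence gU: "g \<in> U_set w l n" and gC: "g \<in> carrier_mat n n" by (auto simp: U_set_def)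
      from g obtain h k where h: "h \<in> centralizer sl w l n xt" and k: "k \<in> Kker sl w l m n"
        and ghk: "cong_mat w l n g (h*k)" unfolding prod_mod_def by blast
      have hC: "h \<in> carrier_mat n n" using h by (simp add: centralizer_def grp_def)
      have kC: "k \<in> carrier_mat n n" using k by (simp add: Kker_def grp_def)
      have k1: "cong_mat w m n k (1\<^sub>m n)" using k by (simp add: Kker_def)
      have hcm: "cong_mat w m n (h*xt) (xt*h)"
        using h ml by (auto simp: centralizer_def intro: cong_mat_weaken)
      have hrefl: "cong_mat w m n h h" by (simp add: cong_mat_def)
      have "cong_mat w m n (h*k) (h*1\<^sub>m n)"
        by (rule cong_mat_mult[OF hC hC kC _ hrefl k1]) simp
      hence "cong_mat w m n (h*k) h" using hC by simp
      hence gh: "cong_mat w m n g h" using cong_mat_weaken[OF ghk ml] cong_mat_trans by blast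
      have xxt: "cong_mat w m n x xt" using assms(11) cong_mat_sym by blast
      have a1: "cong_mat w m n (g*x) (h*xt)" by (rule cong_mat_mult[OF gC hC xC xtC gh xxt])
      have a2: "cong_mat w m n (xt*h) (x*g)"
        by (rule cong_mat_mult[OF xtC xC hC gC assms(11) cong_mat_sym[OF gh]])
      have gx: "cong_mat w m n (g*x) (x*g)" using a1 hcm a2 cong_mat_trans by blast
      have low: "\<And>i j. i<n \<Longrightarrow> j<n \<Longrightarrow> j<i \<Longrightarrow> w^m dvd g$$(i,j)"
        using gU mdl by (auto simp: U_set_def intro: dvd_trans)
      have "\<And>i j. i<n \<Longrightarrow> j<n \<Longrightarrow> i<j \<Longrightarrow> w^m dvd g$$(i,j)"
        by (rule comm_U[OF gC xC low gx xc vm])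
      thus "g \<in> U_pi w m l n" using gU by (simp add: U_pi_def)
    qed
  qed
  have P3: "\<forall>\<chi>. is_char_on w l n (prod_mod sl w l n (centralizer sl w l n xt) (Kker sl w l m n)) \<chi>
           \<and> (\<forall>k\<in>Kker sl w l m n. \<chi> k = phi_x \<phi> w m x k)
           \<longrightarrow> hom_chars (U_pi w m l n) \<chi> (theta \<phi> a) \<noteq> {0}"
  proof (intro allI impI)
    fix \<chi> assume c: "is_char_on w l n (prod_mod sl w l n (centralizer sl w l n xt) (Kker sl w l m n)) \<chi>
           \<and> (\<forall>k\<in>Kker sl w l m n. \<chi> k = phi_x \<phi> w m x k)"
    have "1 \<in> hom_chars (U_pi w m l n) \<chi> (theta \<phi> a)"
      unfolding hom_chars_def using c UK P2 by auto
    thus "hom_chars (U_pi w m l n) \<chi> (theta \<phi> a) \<noteq> {0}" by auto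
  qed
  show ?thesis using P1 P2 P3 by blast
qed

end
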